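(* Let $G$, $P$, $w$ be as in the context, let $t\in V$, let $\mathcal F\subseteq V\setminus\{t\}$ be a set of failed nodes, and let $s\in V\setminus(\mathcal F\cup\{t\})$ be such that there is a directed path from $s$ to $t$ in $G$ avoiding $\mathcal F$. Let $L_{st}^{\overline{\mathcal F}}$ be the minimum total cost of a directed path from $s$ to $t$ in the graph obtained from $G$ by deleting the nodes of $\mathcal F$. Then $$\lim_{\alpha\to0^+}U_s^{\{t,\overline{\mathcal F\cup\{o\}}\}}(\alpha)=L_{st}^{\overline{\mathcal F}}.$$
   Context: $G=(V,E)$ is a finite directed graph; each edge $e_{ij}\in E$ has a positive cost $w_{ij}$; $P$ is a row-stochastic transition matrix with $P_{ij}>0$ iff $e_{ij}\in E$. Evaporating network $G_\alpha$ ($0<\alpha<1$): Markov chain on $V\cup\{o\}$ with $P_{ij}(\alpha)=P_{ij}\alpha^{w_{ij}}$ ($i,j\in V$), $P_{io}(\alpha)=1-\sum_jP_{ij}\alpha^{w_{ij}}$, $o$ absorbing. Avoidance hitting cost with avoided set $B$: make $t$, $o$ and all nodes of $B\subseteq V\setminus\{t\}$ absorbing in $G_\alpha$, let $\mathcal T=V\setminus(\{t\}\cup B)$, let $Q_x$ be the probability that the chain from $x$ is absorbed at $t$ (so $Q_t=1$, $Q_o=Q_b=0$ for $b\in B$), let $F(\alpha)=(I-P(\alpha)_{\mathcal T\mathcal T})^{-1}$, and set $U_s^{\{t,\overline{B\cup\{o\}}\}}(\alpha)=\sum_{m\in\mathcal T}F_{sm}(\alpha)\frac{Q_m}{Q_s}r_m$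 with $r_m=\sum_iP_{mi}(\alpha)w_{mi}Q_i/Q_m$ (terms with $Q_m=0$ omitted). This is the expected total cost of the walk from $s$ conditioned on being absorbed at $t$ (thus avoiding $B$ and $o$). *)

theory Defs
  imports Complex_Main
begin

text \<open>Vertices form a finite set V; P i j is the transition matrix (edge (i,j) exists iff
  P i j > 0); w i j is the edge cost.  The extra absorbing node o is not represented
  explicitly: it only receives the missing mass 1 - sum_j P(alpha) i j and has Q_o = 0.\<close>

definition Pev :: "('v \<Rightarrow> 'v \<Rightarrow> real) \<Rightarrow> ('v \<Rightarrow> 'v \<Rightarrow> real) \<Rightarrow> real \<Rightarrow> 'v \<Rightarrow> 'v \<Rightarrow> real" where
  "Pev P w \<alpha> i j = P i j * \<alpha> powr (w i j)"

definition transient :: "'v set \<Rightarrow> 'v \<Rightarrow> 'v set \<Rightarrow> 'v set" where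
  "transient V t B = V - ({t} \<union> B)"

text \<open>Fundamental matrix F = (I - P(alpha)_TT)^(-1), as the (unique) matrix indexed by T
  (zero outside T x T) satisfying (I - P(alpha)_TT) F = I.\<close>
definition fundmat :: "'v set \<Rightarrow> ('v \<Rightarrow> 'v \<Rightarrow> real) \<Rightarrow> ('v \<Rightarrow> 'v \<Rightarrow> real) \<Rightarrow> real \<Rightarrow> 'v \<Rightarrow> 'v set
    \<Rightarrow> 'v \<Rightarrow> 'v \<Rightarrow> real" where
  "fundmat V P w \<alpha> t B = (THE F.
     (\<forall>s\<in>transient V t B. \<forall>m\<in>transient V t B.
        F s m - (\<Sum>k\<in>transient V t B. Pev P w \<alpha> s k * F k m) = (if s = m then 1 else 0))
   \<and> (\<forall>s m. s \<notin> transient V t B \<or> m \<notin> transient V t B \<longrightarrow> F s m = 0))"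

definition absQ :: "'v set \<Rightarrow> ('v \<Rightarrow> 'v \<Rightarrow> real) \<Rightarrow> ('v \<Rightarrow> 'v \<Rightarrow> real) \<Rightarrow> real \<Rightarrow> 'v \<Rightarrow> 'v set
    \<Rightarrow> 'v \<Rightarrow> real" where
  "absQ V P w \<alpha> t B x =
     (if x = t then 1
      else if x \<in> transient V t B then
        (\<Sum>m\<in>transient V t B. fundmat V P w \<alpha> t B x m * Pev P w \<alpha> m t)
      else 0)"

definition rcost :: "'v set \<Rightarrow> ('v \<Rightarrow> 'v \<Rightarrow> real) \<Rightarrow> ('v \<Rightarrow> 'v \<Rightarrow> real) \<Rightarrow> real \<Rightarrow> 'v \<Rightarrow> 'v set
    \<Rightarrow> 'v \<Rightarrow> real" where
  "rcost V P w \<alpha> t B m =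
     (\<Sum>i\<in>V. Pev P w \<alpha> m i * w m i * absQ V P w \<alpha> t B i) / absQ V P w \<alpha> t B m"

definition avoidU :: "'v set \<Rightarrow> ('v \<Rightarrow> 'v \<Rightarrow> real) \<Rightarrow> ('v \<Rightarrow> 'v \<Rightarrow> real) \<Rightarrow> real \<Rightarrow> 'v \<Rightarrow> 'v set
    \<Rightarrow> 'v \<Rightarrow> real" where
  "avoidU V P w \<alpha> t B s =
     (\<Sum>m\<in>{m\<in>transient V t B. absQ V P w \<alpha> t B m \<noteq> 0}.
        fundmat V P w \<alpha> t B s m * (absQ V P w \<alpha> t B m / absQ V P w \<alpha> t B s)
        * rcost V P w \<alpha> t B m)"

definition dpath :: "'v set \<Rightarrow> ('v \<Rightarrow> 'v \<Rightarrow> real) \<Rightarrow> 'v set \<Rightarrow> 'v \<Rightarrow> 'v \<Rightarrow> 'v list \<Rightarrow> bool" where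
  "dpath V P Fs s t xs \<longleftrightarrow> xs \<noteq> [] \<and> hd xs = s \<and> last xs = t \<and> distinct xs
     \<and> set xs \<subseteq> V - Fs \<and> (\<forall>k < length xs - 1. P (xs ! k) (xs ! Suc k) > 0)"

definition path_cost :: "('v \<Rightarrow> 'v \<Rightarrow> real) \<Rightarrow> 'v list \<Rightarrow> real" where
  "path_cost w xs = (\<Sum>k < length xs - 1. w (xs ! k) (xs ! Suc k))"

definition Lmin :: "'v set \<Rightarrow> ('v \<Rightarrow> 'v \<Rightarrow> real) \<Rightarrow> ('v \<Rightarrow> 'v \<Rightarrow> real) \<Rightarrow> 'v set \<Rightarrow> 'v \<Rightarrow> 'v \<Rightarrow> real" where
  "Lmin V P w Fs s t = Min (path_cost w ` {xs. dpath V P Fs s t xs})"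

end

theory Submission
  imports Defs
begin


lemma maxp:
  fixes S :: "'v set" and A :: "'v \<Rightarrow> 'v \<Rightarrow> real"
  assumes fin: "finite S" and x: "x \<in> S"
    and Ann: "\<And>a k. a \<in> S \<Longrightarrow> k \<in> S \<Longrightarrow> A a k \<ge> 0"
    and phi: "\<And>a. a \<in> S \<Longrightarrow> \<phi> a > 0"
    and rows: "\<And>a. a \<in> S \<Longrightarrow> (\<Sum>k\<in>S. A a k * \<phi> k) \<le> \<phi> a - c"
    and c: "c > 0" and eta: "\<eta> \<ge> 0"
    and v: "\<And>a. a \<in> S \<Longrightarrow> v a \<le> (\<Sum>k\<in>S. A a k * v k) + \<eta>"
  shows "v x \<le> \<eta> / c * \<phi> x"
proof -
  define lam where "lam = Max ((\<lambda>a. v a / \<phi> a) ` S)"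
  have ne: "S \<noteq> {}" using x by auto
  have le: "v a \<le> lam * \<phi> a" if "a \<in> S" for a
  proof -
    have "v a / \<phi> a \<le> lam" unfolding lam_def using fin that by auto
    thus ?thesis using phi[OF that] by (simp add: divide_le_eq)
  qed
  have "lam \<in> (\<lambda>a. v a / \<phi> a) ` S" unfolding lam_def using fin ne by (intro Max_in) auto
  then obtain a0 where a0: "a0 \<in> S" "lam = v a0 / \<phi> a0" by auto
  have va0: "v a0 = lam * \<phi> a0" using a0 phi[OF a0(1)] by simp
  show ?thesis
  proof (cases "lam \<le> \<eta> / c")
    case True
    have "v x \<le> lam * \<phi> x" by (rule le[OF x])
    also have "\<dots> \<le> \<eta> / c * \<phi> x" using mult_right_mono[OF True, of "\<phi> x"] phi[OF x] by simp
    finally show ?thesis .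
  next
    case False
    hence lpos: "lam > 0" using eta c by (smt (verit) divide_nonneg_pos)
    have "v a0 \<le> (\<Sum>k\<in>S. A a0 k * v k) + \<eta>" by (rule v[OF a0(1)])
    also have "(\<Sum>k\<in>S. A a0 k * v k) \<le> (\<Sum>k\<in>S. A a0 k * (lam * \<phi> k))"
      by (rule sum_mono) (use Ann[OF a0(1)] le in \<open>simp add: mult_left_mono\<close>)
    also have "\<dots> = lam * (\<Sum>k\<in>S. A a0 k * \<phi> k)"
      by (simp add: sum_distrib_left algebra_simps)
    also have "\<dots> \<le> lam * (\<phi> a0 - c)" using rows[OF a0(1)] lpos by (simp add: mult_left_mono)
    finally have "lam * c \<le> \<eta>" using va0 by (simp add: algebra_simps)
    hence "lam \<le> \<eta> / c" using c by (simp add: le_divide_eq)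
    with False show ?thesis by simp
  qed
qed

lemma solve_exists:
  fixes A :: "'v \<Rightarrow> 'v \<Rightarrow> real"
  assumes "finite S"
  shows "(\<forall>x\<in>S. \<forall>k\<in>S. A x k \<ge> 0) \<Longrightarrow> (\<forall>x\<in>S. (\<Sum>k\<in>S. A x k) < 1) \<Longrightarrow>
     \<exists>u. \<forall>x\<in>S. u x = (\<Sum>k\<in>S. A x k * u k) + b x"
  using assms
proof (induction S arbitrary: A b rule: finite_induct)
  case empty
  then show ?case by simp
next
  case (insert y S)
  define a where "a = A y y"
  have rs: "(\<Sum>k\<in>insert y S. A y k) < 1" using insert by auto
  have rsy: "(\<Sum>k\<in>insert y S. A y k) = a + (\<Sum>k\<in>S. A y k)" using insert(1,2) a_def by simp
  have Sy0: "(\<Sum>k\<in>S. A y k) \<ge> 0" using insert(4) by (auto intro: sum_nonneg)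
  have a1: "a < 1" using rs rsy Sy0 by linarith
  define A' where "A' x k = A x k + A x y * A y k / (1 - a)" for x k
  define b' where "b' x = b x + A x y * b y / (1 - a)" for x
  have "\<forall>x\<in>S. \<forall>k\<in>S. A' x k \<ge> 0" using insert(4) a1 unfolding A'_def by auto
  moreover have "\<forall>x\<in>S. (\<Sum>k\<in>S. A' x k) < 1"
  proof
    fix x assume xS: "x \<in> S"
    have "(\<Sum>k\<in>S. A' x k) = (\<Sum>k\<in>S. A x k) + A x y * ((\<Sum>k\<in>S. A y k) / (1 - a))"
      unfolding A'_def by (simp add: sum.distrib sum_distrib_left sum_divide_distrib)
    also have "\<dots> \<le> (\<Sum>k\<in>S. A x k) + A x y * 1"
      using rs rsy a1 xS insert(4) by (intro add_left_mono mult_left_mono) auto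
    also have "\<dots> = (\<Sum>k\<in>insert y S. A x k)" using insert(1,2) by simp
    also have "\<dots> < 1" using insert(5) xS by auto
    finally show "(\<Sum>k\<in>S. A' x k) < 1" .
  qed
  ultimately obtain u' where u': "\<forall>x\<in>S. u' x = (\<Sum>k\<in>S. A' x k * u' k) + b' x"
    using insert(3)[of A' b'] insert(1) by blast
  define uy where "uy = ((\<Sum>k\<in>S. A y k * u' k) + b y) / (1 - a)"
  define u where "u = u'(y := uy)"
  have sumS: "(\<Sum>k\<in>S. F k * u k) = (\<Sum>k\<in>S. F k * u' k)" for F
    using insert(2) unfolding u_def by (intro sum.cong) auto
  show ?case
  proof (intro exI ballI)
    fix x assume "x \<in> insert y S"
    then consider "x = y" | "x \<in> S" "x \<noteq> y" using insert(2) by auto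
    then show "u x = (\<Sum>k\<in>insert y S. A x k * u k) + b x"
    proof cases
      case 1
      have "(\<Sum>k\<in>insert y S. A x k * u k) + b x = a * uy + (\<Sum>k\<in>S. A y k * u' k) + b y"
        using insert(1,2) 1 sumS[of "A y"] by (simp add: a_def u_def)
      also have "\<dots> = uy" using a1 unfolding uy_def by (simp add: field_simps)
      finally show ?thesis using 1 by (simp add: u_def)
    next
      case 2
      have "u x = u' x" using 2 by (simp add: u_def)
      also have "\<dots> = (\<Sum>k\<in>S. A' x k * u' k) + b' x" using u' 2 by auto
      also have "\<dots> = (\<Sum>k\<in>S. A x k * u' k) + A x y * uy + b x"
        unfolding A'_def b'_def uy_def using a1
        by (simp add: algebra_simps sum.distrib sum_distrib_left sum_divide_distrib add_divide_distrib)
      also have "\<dots> = (\<Sum>k\<in>insert y S. A x k * u k) + b x"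
        using insert(1,2) sumS[of "A x"] by (simp add: u_def)
      finally show ?thesis .
    qed
  qed
qed




fun chainP :: "('v \<Rightarrow> 'v \<Rightarrow> real) \<Rightarrow> 'v list \<Rightarrow> bool" where
  "chainP P (x # y # ys) = (P x y > 0 \<and> chainP P (y # ys))"
| "chainP P _ = True"

fun pc :: "('v \<Rightarrow> 'v \<Rightarrow> real) \<Rightarrow> 'v list \<Rightarrow> real" where
  "pc w (x # y # ys) = w x y + pc w (y # ys)"
| "pc w _ = 0"

lemma chain_iff: "(\<forall>k < length xs - 1. P (xs!k) (xs!Suc k) > 0) \<longleftrightarrow> chainP P xs"
proof (induction P xs rule: chainP.induct)
  case (1 P x y ys)
  show ?case
    using 1 by (auto simp: less_Suc_eq_0_disj)
qed auto

lemma pc_eq: "path_cost w xs = pc w xs"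
proof (induction w xs rule: pc.induct)
  case (1 w x y ys)
  then show ?case unfolding path_cost_def by (simp add: sum.lessThan_Suc_shift del: sum.lessThan_Suc)
qed (auto simp: path_cost_def)

lemma pc_nonneg:
  "chainP P xs \<Longrightarrow> set xs \<subseteq> V \<Longrightarrow> (\<And>i j. i \<in> V \<Longrightarrow> j \<in> V \<Longrightarrow> P i j > 0 \<Longrightarrow> w i j > 0)
   \<Longrightarrow> pc w xs \<ge> 0"
proof (induction xs rule: induct_list012)
  case (3 x y ys)
  have wp: "w x y > 0" using 3(3-5) by auto
  have "pc w (y # ys) \<ge> 0" using 3 by auto
  with wp show ?case by simp
qed auto

lemma pc_suffix:
  assumes "chainP P (as @ x # bs)" "set (as @ x # bs) \<subseteq> V"
    "\<And>i j. i \<in> V \<Longrightarrow> j \<in> V \<Longrightarrow> P i j > 0 \<Longrightarrow> w i j > 0"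
  shows "chainP P (x # bs) \<and> pc w (x # bs) \<le> pc w (as @ x # bs)"
  using assms
proof (induction as)
  case Nil
  then show ?case by simp
next
  case (Cons a as)
  obtain c rest where cr: "as @ x # bs = c # rest" by (cases "as @ x # bs") auto
  have ch: "chainP P (as @ x # bs)" using Cons(2) cr by simp
  have IH: "chainP P (x # bs) \<and> pc w (x # bs) \<le> pc w (as @ x # bs)"
    using Cons ch by auto
  have "P a c > 0" using Cons(2) cr by simp
  moreover have "a \<in> V" "c \<in> V" using Cons(3) cr by auto
  ultimately have "w a c > 0" using Cons(4) by auto
  then have "pc w (as @ x # bs) \<le> pc w ((a # as) @ x # bs)" using cr by simp
  with IH show ?case by linarith
qed

lemma prod_chain_ge:
  fixes Q :: "'v \<Rightarrow> real" and A :: "'v \<Rightarrow> 'v \<Rightarrow> real"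
  assumes "\<And>x y. x \<noteq> t \<Longrightarrow> x \<in> set xs \<Longrightarrow> y \<in> set xs \<Longrightarrow> Q x \<ge> A x y * Q y"
    and "\<And>x y. x \<in> set xs \<Longrightarrow> y \<in> set xs \<Longrightarrow> A x y \<ge> 0"
    and "Q t = 1" 
  shows "xs \<noteq> [] \<Longrightarrow> last xs = t \<Longrightarrow> t \<notin> set (butlast xs) \<Longrightarrow> 
     Q (hd xs) \<ge> (\<Prod>k<length xs - 1. A (xs!k) (xs!Suc k))"
  using assms
proof (induction xs rule: induct_list012)
  case (3 x y ys)
  have xt: "x \<noteq> t" using 3(5) by auto
  have ge: "Q y \<ge> (\<Prod>k<length (y#ys) - 1. A ((y#ys)!k) ((y#ys)!Suc k))"
    using 3 by auto
  have "(\<Prod>k<length (x#y#ys) - 1. A ((x#y#ys)!k) ((x#y#ys)!Suc k))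
      = A x y * (\<Prod>k<length (y#ys) - 1. A ((y#ys)!k) ((y#ys)!Suc k))"
    by (simp add: prod.lessThan_Suc_shift del: prod.lessThan_Suc)
  also have "\<dots> \<le> A x y * Q y" using ge 3(7) by (simp add: mult_left_mono)
  also have "\<dots> \<le> Q x" using 3(6) xt by simp
  finally show ?case by simp
qed auto




locale setting =
  fixes V :: "'v set" and P w :: "'v \<Rightarrow> 'v \<Rightarrow> real" and t :: 'v and Fs :: "'v set"
  assumes finV: "finite V"
    and Pnn: "\<And>i j. i \<in> V \<Longrightarrow> j \<in> V \<Longrightarrow> P i j \<ge> 0"
    and Prow: "\<And>i. i \<in> V \<Longrightarrow> (\<Sum>j\<in>V. P i j) = 1"
    and wpos: "\<And>i j. i \<in> V \<Longrightarrow> j \<in> V \<Longrightarrow> P i j > 0 \<Longrightarrow> w i j > 0"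
    and tV: "t \<in> V" and FsV: "Fs \<subseteq> V - {t}"
begin

definition "T = transient V t Fs"
definition "R = {x\<in>T. \<exists>xs. dpath V P Fs x t xs}"
definition "Lf x = (if x = t then 0 else Lmin V P w Fs x t)"

lemma T_alt: "T = V - ({t} \<union> Fs)" unfolding T_def transient_def by simp

lemma finT: "finite T" using finV unfolding T_alt by auto

lemma R_T: "R \<subseteq> T" unfolding R_def by auto

lemma V_split: "(\<Sum>i\<in>V. f i) = (\<Sum>i\<in>T. f i) + f t + (\<Sum>i\<in>Fs. f i)"
proof -
  have V: "V = T \<union> ({t} \<union> Fs)" using tV FsV unfolding T_alt by auto
  have fin: "finite Fs" using FsV finV finite_subset by auto
  have e: "sum f V = sum f (T \<union> ({t} \<union> Fs))" using V by (rule arg_cong)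
  have "(\<Sum>i\<in>V. f i) = (\<Sum>i\<in>T. f i) + (\<Sum>i\<in>{t} \<union> Fs. f i)"
    unfolding e by (rule sum.union_disjoint) (use finT fin in \<open>auto simp: T_alt\<close>)
  also have "(\<Sum>i\<in>{t} \<union> Fs. f i) = f t + (\<Sum>i\<in>Fs. f i)"
    using fin FsV by (subst sum.union_disjoint) auto
  finally show ?thesis by (simp only: add.assoc)
qed

lemma fin_paths: "finite {xs. dpath V P Fs x t xs}"
  by (rule finite_subset[OF _ finite_subset_distinct[OF finV]]) (auto simp: dpath_def)

lemma dpath_chain: "dpath V P Fs x y xs \<Longrightarrow> chainP P xs \<and> set xs \<subseteq> V"
  unfolding dpath_def using chain_iff[of xs P] by auto

lemma dpath_cost_nonneg: "dpath V P Fs x y xs \<Longrightarrow> path_cost w xs \<ge> 0"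
  using dpath_chain[of x y xs] pc_nonneg[of P xs V w] wpos by (auto simp: pc_eq)

lemma Lmin_attained:
  assumes "x \<in> R"
  shows "\<exists>xs. dpath V P Fs x t xs \<and> path_cost w xs = Lf x"
proof -
  have xt: "x \<noteq> t" using assms R_T unfolding T_alt by auto
  have ne: "{xs. dpath V P Fs x t xs} \<noteq> {}" using assms unfolding R_def by auto
  have "Lmin V P w Fs x t \<in> path_cost w ` {xs. dpath V P Fs x t xs}"
    unfolding Lmin_def using fin_paths ne by (intro Min_in) auto
  then show ?thesis using xt unfolding Lf_def by auto
qed

lemma Lmin_le:
  assumes "dpath V P Fs x t xs" "x \<noteq> t"
  shows "Lf x \<le> path_cost w xs"
  using assms fin_paths unfolding Lf_def Lmin_def by (auto intro: Min_le)

lemma dpath_t: "dpath V P Fs t t [t]"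
  using tV FsV unfolding dpath_def by auto

lemma path_from:
  assumes "i \<in> R \<union> {t}"
  shows "\<exists>ys. dpath V P Fs i t ys \<and> pc w ys = Lf i"
proof (cases "i = t")
  case True
  then show ?thesis using dpath_t unfolding Lf_def by (intro exI[of _ "[t]"]) auto
next
  case False
  then show ?thesis using assms Lmin_attained by (auto simp: pc_eq)
qed

lemma Lf_nonneg: "i \<in> R \<union> {t} \<Longrightarrow> Lf i \<ge> 0"
proof -
  assume "i \<in> R \<union> {t}"
  then obtain ys where "dpath V P Fs i t ys" "pc w ys = Lf i" using path_from by blast
  then show ?thesis using dpath_cost_nonneg[of i t ys] by (simp add: pc_eq)
qed

lemma bellman:
  assumes x: "x \<in> T" and i: "i \<in> R \<union> {t}" and Pxi: "P x i > 0"
  shows "x \<in> R \<and> Lf x \<le> w x i + Lf i"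
proof -
  obtain ys where ys: "dpath V P Fs i t ys" "pc w ys = Lf i" using path_from[OF i] by auto
  have xt: "x \<noteq> t" and xV: "x \<in> V" and xF: "x \<notin> Fs" using x unfolding T_alt by auto
  have iV: "i \<in> V" using ys(1) unfolding dpath_def by (cases ys) auto
  have wxi: "w x i > 0" using wpos[OF xV iV Pxi] .
  have chys: "chainP P ys" "set ys \<subseteq> V" using dpath_chain[OF ys(1)] by auto
  have hd: "hd ys = i" "ys \<noteq> []" using ys(1) unfolding dpath_def by auto
  show ?thesis
  proof (cases "x \<in> set ys")
    case False
    have "dpath V P Fs x t (x # ys)"
    proof -
      have "chainP P (x # ys)" using hd chys Pxi by (cases ys) auto
      thus ?thesis using ys(1) False xV xF hd chain_iff[of "x # ys" P] unfolding dpath_def by auto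
    qed
    moreover have "pc w (x # ys) = w x i + Lf i" using hd ys(2) by (cases ys) auto
    ultimately show ?thesis using Lmin_le[of x "x # ys"] xt x unfolding R_def by (auto simp: pc_eq)
  next
    case True
    then obtain as bs where ab: "ys = as @ x # bs" by (meson split_list)
    have suf: "chainP P (x # bs) \<and> pc w (x # bs) \<le> pc w ys"
      using pc_suffix[of P as x bs V w] chys wpos ab by auto
    have "dpath V P Fs x t (x # bs)"
      using ys(1) suf ab chain_iff[of "x # bs" P] unfolding dpath_def by auto
    then have "x \<in> R" "Lf x \<le> pc w (x # bs)" using Lmin_le[of x "x # bs"] xt x
      unfolding R_def by (auto simp: pc_eq)
    then show ?thesis using suf ys(2) wxi by auto
  qed
qed

end



context setting begin

lemma Pev_nn: "i \<in> V \<Longrightarrow> j \<in> V \<Longrightarrow> 0 < \<alpha> \<Longrightarrow> Pev P w \<alpha> i j \<ge> 0"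
  unfolding Pev_def using Pnn by auto

lemma Pev_le: "i \<in> V \<Longrightarrow> j \<in> V \<Longrightarrow> 0 < \<alpha> \<Longrightarrow> \<alpha> < 1 \<Longrightarrow> Pev P w \<alpha> i j \<le> P i j"
proof -
  assume a: "i \<in> V" "j \<in> V" "0 < \<alpha>" "\<alpha> < 1"
  show ?thesis
  proof (cases "P i j > 0")
    case True
    then have "w i j > 0" using wpos a by auto
    then have "\<alpha> powr w i j < 1" using a powr01_less_one by auto
    then show ?thesis unfolding Pev_def using True by (simp add: mult_left_le)
  next
    case False
    then have "P i j = 0" using Pnn a by force
    then show ?thesis unfolding Pev_def by simp
  qed
qed

lemma rowsum_lt:
  assumes x: "x \<in> T" and a: "0 < \<alpha>" "\<alpha> < 1"
  shows "(\<Sum>k\<in>T. Pev P w \<alpha> x k) < 1"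
proof -
  have xV: "x \<in> V" using x T_alt by auto
  have TV: "T \<subseteq> V" using T_alt by auto
  have "(\<Sum>k\<in>T. Pev P w \<alpha> x k) \<le> (\<Sum>k\<in>V. Pev P w \<alpha> x k)"
    using TV finV Pev_nn[OF xV _ a(1)] by (intro sum_mono2) auto
  also have "\<dots> < (\<Sum>k\<in>V. P x k)"
  proof (rule sum_strict_mono_ex1[OF finV])
    show "\<forall>k\<in>V. Pev P w \<alpha> x k \<le> P x k" using Pev_le[OF xV _ a] by auto
    have "\<exists>j\<in>V. P x j > 0"
    proof (rule ccontr)
      assume "\<not> ?thesis"
      then have "\<forall>j\<in>V. P x j = 0" using Pnn[OF xV] by force
      then have "(\<Sum>j\<in>V. P x j) = 0" by simp
      then show False using Prow[OF xV] by simp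
    qed
    then obtain j where j: "j \<in> V" "P x j > 0" by auto
    then have "w x j > 0" using wpos xV by auto
    then have "\<alpha> powr w x j < 1" using a powr01_less_one by auto
    then have "Pev P w \<alpha> x j < P x j" unfolding Pev_def using j by simp
    then show "\<exists>k\<in>V. Pev P w \<alpha> x k < P x k" using j by auto
  qed
  also have "\<dots> = 1" using Prow[OF xV] .
  finally show ?thesis .
qed

definition "cT \<alpha> = Min (insert 1 ((\<lambda>x. 1 - (\<Sum>k\<in>T. Pev P w \<alpha> x k)) ` T))"

lemma cT_pos: "0 < \<alpha> \<Longrightarrow> \<alpha> < 1 \<Longrightarrow> cT \<alpha> > 0"
  unfolding cT_def using finT rowsum_lt by (subst Min_gr_iff) auto

lemma cT_row: "x \<in> T \<Longrightarrow> (\<Sum>k\<in>T. Pev P w \<alpha> x k * 1) \<le> 1 - cT \<alpha>"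
proof -
  assume x: "x \<in> T"
  have "cT \<alpha> \<le> 1 - (\<Sum>k\<in>T. Pev P w \<alpha> x k)" unfolding cT_def using finT x by (intro Min_le) auto
  then show ?thesis by simp
qed

lemma homog_zero:
  assumes a: "0 < \<alpha>" "\<alpha> < 1" and S: "S \<subseteq> T"
    and H: "\<And>x. x \<in> S \<Longrightarrow> H x = (\<Sum>k\<in>S. Pev P w \<alpha> x k * H k)"
    and x: "x \<in> S"
  shows "H x = 0"
proof -
  have finS: "finite S" using finT S finite_subset by auto
  have nn: "\<And>a k. a \<in> S \<Longrightarrow> k \<in> S \<Longrightarrow> Pev P w \<alpha> a k \<ge> 0"
    using Pev_nn a S T_alt by auto
  have row: "\<And>a. a \<in> S \<Longrightarrow> (\<Sum>k\<in>S. Pev P w \<alpha> a k * 1) \<le> 1 - cT \<alpha>"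
  proof -
    fix a0 assume a0: "a0 \<in> S"
    have "(\<Sum>k\<in>S. Pev P w \<alpha> a0 k * 1) \<le> (\<Sum>k\<in>T. Pev P w \<alpha> a0 k * 1)"
      using S finT nn Pev_nn[OF _ _ a(1), of a0] a0 T_alt by (intro sum_mono2) auto
    also have "\<dots> \<le> 1 - cT \<alpha>" using cT_row a0 S by auto
    finally show "(\<Sum>k\<in>S. Pev P w \<alpha> a0 k * 1) \<le> 1 - cT \<alpha>" .
  qed
  have "H x \<le> 0 / cT \<alpha> * 1"
  proof (rule maxp[OF finS x nn, where \<phi>="\<lambda>_. 1" and v=H and c="cT \<alpha>"])
    fix a0 assume "a0 \<in> S"
    then show "H a0 \<le> (\<Sum>k\<in>S. Pev P w \<alpha> a0 k * H k) + 0" using H[of a0] by linarith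
  qed (use row cT_pos[OF a] in auto)
  moreover have "- H x \<le> 0 / cT \<alpha> * 1"
  proof (rule maxp[OF finS x nn, where \<phi>="\<lambda>_. 1" and v="\<lambda>k. - H k" and c="cT \<alpha>"])
    fix a0 assume "a0 \<in> S"
    then show "- H a0 \<le> (\<Sum>k\<in>S. Pev P w \<alpha> a0 k * - H k) + 0" using H[of a0]
      by (simp add: sum_negf)
  qed (use row cT_pos[OF a] in auto)
  ultimately show ?thesis by simp
qed

definition "Fpred \<alpha> F \<longleftrightarrow>
     (\<forall>s\<in>T. \<forall>m\<in>T. F s m - (\<Sum>k\<in>T. Pev P w \<alpha> s k * F k m) = (if s = m then 1 else 0))
   \<and> (\<forall>s m. s \<notin> T \<or> m \<notin> T \<longrightarrow> F s m = 0)"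

lemma fund_ex1:
  assumes a: "0 < \<alpha>" "\<alpha> < 1"
  shows "\<exists>!F. Fpred \<alpha> F"
proof -
  have ex: "\<exists>u. \<forall>x\<in>T. u x = (\<Sum>k\<in>T. Pev P w \<alpha> x k * u k) + (if x = m then 1 else 0)" for m
    using solve_exists[OF finT, of "Pev P w \<alpha>"] Pev_nn[OF _ _ a(1)] rowsum_lt[OF _ a] T_alt
    by auto
  define G where "G s m = (if s \<in> T \<and> m \<in> T then
     (SOME u. \<forall>x\<in>T. u x = (\<Sum>k\<in>T. Pev P w \<alpha> x k * u k) + (if x = m then 1 else 0)) s else 0)" for s m
  have G: "\<forall>x\<in>T. G x m = (\<Sum>k\<in>T. Pev P w \<alpha> x k * G k m) + (if x = m then 1 else 0)"
    if "m \<in> T" for m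
  proof -
    let ?u = "SOME u. \<forall>x\<in>T. u x = (\<Sum>k\<in>T. Pev P w \<alpha> x k * u k) + (if x = m then 1 else 0)"
    have "\<forall>x\<in>T. ?u x = (\<Sum>k\<in>T. Pev P w \<alpha> x k * ?u k) + (if x = m then 1 else 0)"
      using someI_ex[OF ex[of m]] .
    moreover have "\<And>x. x \<in> T \<Longrightarrow> G x m = ?u x" using that unfolding G_def by auto
    ultimately show ?thesis by (metis (no_types, lifting) sum.cong)
  qed
  have "Fpred \<alpha> G" unfolding Fpred_def using G by (auto simp: G_def)
  moreover have "F1 = F2" if "Fpred \<alpha> F1" "Fpred \<alpha> F2" for F1 F2
  proof (intro ext)
    fix s m
    show "F1 s m = F2 s m"
    proof (cases "s \<in> T \<and> m \<in> T")
      case True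
      have "F1 s m - F2 s m = 0"
      proof (rule homog_zero[OF a order_refl, where H="\<lambda>k. F1 k m - F2 k m"])
        fix x assume x: "x \<in> T"
        have "F1 x m - (\<Sum>k\<in>T. Pev P w \<alpha> x k * F1 k m) = F2 x m - (\<Sum>k\<in>T. Pev P w \<alpha> x k * F2 k m)"
          using that x True unfolding Fpred_def by auto
        then show "F1 x m - F2 x m = (\<Sum>k\<in>T. Pev P w \<alpha> x k * (F1 k m - F2 k m))"
          by (simp add: right_diff_distrib sum_subtractf)
      qed (use True in auto)
      then show ?thesis by simp
    next
      case False
      then show ?thesis using that unfolding Fpred_def by auto
    qed
  qed
  ultimately show ?thesis by blast
qed

lemma fundmat_pred:
  assumes a: "0 < \<alpha>" "\<alpha> < 1"
  shows "Fpred \<alpha> (fundmat V P w \<alpha> t Fs)"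
proof -
  have "fundmat V P w \<alpha> t Fs = (THE F. Fpred \<alpha> F)"
    unfolding fundmat_def Fpred_def T_def by simp
  then show ?thesis using theI'[OF fund_ex1[OF a]] by simp
qed

lemma fund_apply:
  assumes a: "0 < \<alpha>" "\<alpha> < 1" and x: "x \<in> T"
  shows "(\<Sum>m\<in>T. fundmat V P w \<alpha> t Fs x m * b m)
       = b x + (\<Sum>k\<in>T. Pev P w \<alpha> x k * (\<Sum>m\<in>T. fundmat V P w \<alpha> t Fs k m * b m))"
proof -
  let ?F = "fundmat V P w \<alpha> t Fs"
  have F: "?F x m = (if x = m then 1 else 0) + (\<Sum>k\<in>T. Pev P w \<alpha> x k * ?F k m)" if "m \<in> T" for m
    using fundmat_pred[OF a] x that unfolding Fpred_def by (auto simp: algebra_simps)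
  have "(\<Sum>m\<in>T. ?F x m * b m) = (\<Sum>m\<in>T. (if x = m then b m else 0)
        + (\<Sum>k\<in>T. Pev P w \<alpha> x k * ?F k m * b m))"
    by (intro sum.cong refl) (simp add: F distrib_right sum_distrib_right)
  also have "\<dots> = b x + (\<Sum>m\<in>T. \<Sum>k\<in>T. Pev P w \<alpha> x k * ?F k m * b m)"
    using x finT by (simp add: sum.distrib)
  also have "(\<Sum>m\<in>T. \<Sum>k\<in>T. Pev P w \<alpha> x k * ?F k m * b m)
      = (\<Sum>k\<in>T. Pev P w \<alpha> x k * (\<Sum>m\<in>T. ?F k m * b m))"
    by (subst sum.swap) (simp add: sum_distrib_left mult.assoc)
  finally show ?thesis .
qed

end



context setting begin

lemma sub_nonpos:
  assumes a: "0 < \<alpha>" "\<alpha> < 1" and S: "S \<subseteq> T"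
    and H: "\<And>x. x \<in> S \<Longrightarrow> v x \<le> (\<Sum>k\<in>S. Pev P w \<alpha> x k * v k)"
    and x: "x \<in> S"
  shows "v x \<le> 0"
proof -
  have finS: "finite S" using finT S finite_subset by auto
  have nn: "\<And>a k. a \<in> S \<Longrightarrow> k \<in> S \<Longrightarrow> Pev P w \<alpha> a k \<ge> 0"
    using Pev_nn a S T_alt by auto
  have row: "\<And>a. a \<in> S \<Longrightarrow> (\<Sum>k\<in>S. Pev P w \<alpha> a k * 1) \<le> 1 - cT \<alpha>"
  proof -
    fix a0 assume a0: "a0 \<in> S"
    have "(\<Sum>k\<in>S. Pev P w \<alpha> a0 k * 1) \<le> (\<Sum>k\<in>T. Pev P w \<alpha> a0 k * 1)"
      using S finT nn Pev_nn[OF _ _ a(1), of a0] a0 T_alt by (intro sum_mono2) auto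
    also have "\<dots> \<le> 1 - cT \<alpha>" using cT_row a0 S by auto
    finally show "(\<Sum>k\<in>S. Pev P w \<alpha> a0 k * 1) \<le> 1 - cT \<alpha>" .
  qed
  have "v x \<le> 0 / cT \<alpha> * 1"
  proof (rule maxp[OF finS x nn, where \<phi>="\<lambda>_. 1" and v=v and c="cT \<alpha>"])
    fix a0 assume "a0 \<in> S"
    then show "v a0 \<le> (\<Sum>k\<in>S. Pev P w \<alpha> a0 k * v k) + 0" using H[of a0] by linarith
  qed (use row cT_pos[OF a] in auto)
  then show ?thesis by simp
qed

abbreviation "Q \<alpha> \<equiv> absQ V P w \<alpha> t Fs"
definition "cc \<alpha> m = (\<Sum>i\<in>V. Pev P w \<alpha> m i * w m i * Q \<alpha> i)"
definition "Na \<alpha> x = (if x \<in> T then (\<Sum>m\<in>T. fundmat V P w \<alpha> t Fs x m * cc \<alpha> m) else 0)"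

lemma Q_T: "x \<in> T \<Longrightarrow> Q \<alpha> x = (\<Sum>m\<in>T. fundmat V P w \<alpha> t Fs x m * Pev P w \<alpha> m t)"
  unfolding absQ_def T_def by (auto simp: transient_def)
lemma Q_t: "Q \<alpha> t = 1" unfolding absQ_def by simp
lemma Q_out: "x \<notin> T \<Longrightarrow> x \<noteq> t \<Longrightarrow> Q \<alpha> x = 0" unfolding absQ_def T_def by auto
lemma Q_Fs: "x \<in> Fs \<Longrightarrow> Q \<alpha> x = 0" using Q_out FsV T_alt by auto
lemma Na_out: "x \<notin> T \<Longrightarrow> Na \<alpha> x = 0" unfolding Na_def by auto
lemma tT: "t \<notin> T" unfolding T_alt by auto
lemma FsT: "x \<in> Fs \<Longrightarrow> x \<notin> T" unfolding T_alt by auto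

lemma Q_eqT:
  assumes a: "0 < \<alpha>" "\<alpha> < 1" and x: "x \<in> T"
  shows "Q \<alpha> x = Pev P w \<alpha> x t + (\<Sum>k\<in>T. Pev P w \<alpha> x k * Q \<alpha> k)"
  using fund_apply[OF a x, of "\<lambda>m. Pev P w \<alpha> m t"] Q_T[OF x] Q_T
  by (simp cong: sum.cong)

lemma Q_eq:
  assumes a: "0 < \<alpha>" "\<alpha> < 1" and x: "x \<in> T"
  shows "Q \<alpha> x = (\<Sum>i\<in>V. Pev P w \<alpha> x i * Q \<alpha> i)"
  using Q_eqT[OF a x] V_split[of "\<lambda>i. Pev P w \<alpha> x i * Q \<alpha> i"] Q_t Q_Fs by simp

lemma Na_eq:
  assumes a: "0 < \<alpha>" "\<alpha> < 1" and x: "x \<in> T"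
  shows "Na \<alpha> x = (\<Sum>i\<in>V. Pev P w \<alpha> x i * (Na \<alpha> i + w x i * Q \<alpha> i))"
proof -
  have "Na \<alpha> x = cc \<alpha> x + (\<Sum>k\<in>T. Pev P w \<alpha> x k * Na \<alpha> k)"
    using fund_apply[OF a x, of "cc \<alpha>"] x unfolding Na_def by (simp cong: sum.cong)
  also have "(\<Sum>k\<in>T. Pev P w \<alpha> x k * Na \<alpha> k) = (\<Sum>i\<in>V. Pev P w \<alpha> x i * Na \<alpha> i)"
    using V_split[of "\<lambda>i. Pev P w \<alpha> x i * Na \<alpha> i"] Na_out[OF tT] Na_out[OF FsT] by simp
  also have "cc \<alpha> x = (\<Sum>i\<in>V. Pev P w \<alpha> x i * (w x i * Q \<alpha> i))"
    unfolding cc_def by (simp add: mult.assoc)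
  finally show ?thesis by (simp add: sum.distrib distrib_left)
qed

lemma Q_nn:
  assumes a: "0 < \<alpha>" "\<alpha> < 1"
  shows "Q \<alpha> x \<ge> 0"
proof (cases "x \<in> T")
  case True
  have "- Q \<alpha> x \<le> 0"
  proof (rule sub_nonpos[OF a order_refl, where v="\<lambda>k. - Q \<alpha> k"])
    fix y assume y: "y \<in> T"
    have "Pev P w \<alpha> y t \<ge> 0" using Pev_nn[OF _ tV a(1)] y T_alt by auto
    then show "- Q \<alpha> y \<le> (\<Sum>k\<in>T. Pev P w \<alpha> y k * - Q \<alpha> k)"
      using Q_eqT[OF a y] by (simp add: sum_negf)
  qed (use True in auto)
  then show ?thesis by simp
next
  case False
  then show ?thesis using Q_t Q_out by (cases "x = t") auto
qed

lemma P_zero: "i \<in> V \<Longrightarrow> j \<in> V \<Longrightarrow> \<not> P i j > 0 \<Longrightarrow> Pev P w \<alpha> i j = 0"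
  unfolding Pev_def using Pnn by (metis less_eq_real_def mult_eq_0_iff)

lemma U_edges:
  assumes x: "x \<in> T - R" and i: "i \<in> R \<union> {t}"
  shows "Pev P w \<alpha> x i = 0"
proof -
  have iV: "i \<in> V" using i R_T T_alt tV by auto
  have "\<not> P x i > 0" using bellman[of x i] x i by auto
  then show ?thesis using P_zero[OF _ iV] x T_alt by auto
qed

lemma V_minus_Rt: "V - (R \<union> {t}) = (T - R) \<union> Fs"
  using R_T FsV tV unfolding T_alt by auto

lemma sum_U:
  assumes x: "x \<in> T - R" and f: "\<And>i. i \<in> Fs \<Longrightarrow> f i = 0"
  shows "(\<Sum>i\<in>V. Pev P w \<alpha> x i * f i) = (\<Sum>i\<in>T - R. Pev P w \<alpha> x i * f i)"
proof (rule sum.mono_neutral_right[OF finV])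
  show "T - R \<subseteq> V" using T_alt by auto
  show "\<forall>i\<in>V - (T - R). Pev P w \<alpha> x i * f i = 0"
  proof
    fix i assume "i \<in> V - (T - R)"
    then have "i \<in> R \<union> {t} \<or> i \<in> Fs" using V_minus_Rt by auto
    then show "Pev P w \<alpha> x i * f i = 0" using U_edges[OF x] f by auto
  qed
qed

lemma sum_R:
  assumes f: "\<And>i. i \<in> T - R \<Longrightarrow> f i = 0" "\<And>i. i \<in> Fs \<Longrightarrow> f i = 0"
  shows "(\<Sum>i\<in>V. g i * f i) = (\<Sum>i\<in>R \<union> {t}. g i * (f i :: real))"
proof (rule sum.mono_neutral_right[OF finV])
  show "R \<union> {t} \<subseteq> V" using R_T T_alt tV by auto
  show "\<forall>i\<in>V - (R \<union> {t}). g i * f i = 0" using V_minus_Rt f by auto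
qed

lemma Q_U:
  assumes a: "0 < \<alpha>" "\<alpha> < 1" and x: "x \<in> T - R"
  shows "Q \<alpha> x = 0"
proof -
  have "Q \<alpha> x \<le> 0"
  proof (rule sub_nonpos[OF a _, where v="Q \<alpha>" and S="T - R"])
    fix y assume y: "y \<in> T - R"
    show "Q \<alpha> y \<le> (\<Sum>k\<in>T - R. Pev P w \<alpha> y k * Q \<alpha> k)"
      using Q_eq[OF a, of y] sum_U[OF y, of "Q \<alpha>"] Q_Fs y by simp
  qed (use x in auto)
  then show ?thesis using Q_nn[OF a, of x] by simp
qed

lemma Na_U:
  assumes a: "0 < \<alpha>" "\<alpha> < 1" and x: "x \<in> T - R"
  shows "Na \<alpha> x = 0"
proof -
  have eq: "Na \<alpha> y = (\<Sum>k\<in>T - R. Pev P w \<alpha> y k * Na \<alpha> k)" if y: "y \<in> T - R" for y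
  proof -
    have "Na \<alpha> y = (\<Sum>i\<in>V. Pev P w \<alpha> y i * (Na \<alpha> i + w y i * Q \<alpha> i))"
      using y by (intro Na_eq[OF a]) auto
    also have "\<dots> = (\<Sum>i\<in>T - R. Pev P w \<alpha> y i * (Na \<alpha> i + w y i * Q \<alpha> i))"
      by (rule sum_U[OF y]) (simp add: Q_Fs Na_out FsT)
    also have "\<dots> = (\<Sum>i\<in>T - R. Pev P w \<alpha> y i * Na \<alpha> i)"
      using Q_U[OF a] by (intro sum.cong) auto
    finally show ?thesis .
  qed
  have "Na \<alpha> x \<le> 0"
  proof (rule sub_nonpos[OF a _, where v="Na \<alpha>" and S="T - R"])
    fix y assume y: "y \<in> T - R"
    show "Na \<alpha> y \<le> (\<Sum>k\<in>T - R. Pev P w \<alpha> y k * Na \<alpha> k)" using eq[OF y] by linarith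
  qed (use x in auto)
  moreover have "- Na \<alpha> x \<le> 0"
  proof (rule sub_nonpos[OF a _, where v="\<lambda>k. - Na \<alpha> k" and S="T - R"])
    fix y assume y: "y \<in> T - R"
    show "- Na \<alpha> y \<le> (\<Sum>k\<in>T - R. Pev P w \<alpha> y k * - Na \<alpha> k)"
      using eq[OF y] by (simp add: sum_negf)
  qed (use x in auto)
  ultimately show ?thesis by simp
qed

lemma avoidU_eq:
  assumes a: "0 < \<alpha>" "\<alpha> < 1" and s: "s \<in> T"
  shows "avoidU V P w \<alpha> t Fs s = Na \<alpha> s / Q \<alpha> s"
proof -
  let ?F = "fundmat V P w \<alpha> t Fs"
  have rc: "rcost V P w \<alpha> t Fs m = cc \<alpha> m / Q \<alpha> m" for m
    unfolding rcost_def cc_def by simp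
  have cc0: "cc \<alpha> m = 0" if m: "m \<in> T" "Q \<alpha> m = 0" for m
  proof -
    have mV: "m \<in> V" using m T_alt by auto
    have nn: "\<And>i. i \<in> V \<Longrightarrow> Pev P w \<alpha> m i * Q \<alpha> i \<ge> 0"
      by (rule mult_nonneg_nonneg[OF Pev_nn[OF mV _ a(1)] Q_nn[OF a]])
    have "(\<Sum>i\<in>V. Pev P w \<alpha> m i * Q \<alpha> i) = 0" using Q_eq[OF a m(1)] m(2) by linarith
    then have z: "\<forall>i\<in>V. Pev P w \<alpha> m i * Q \<alpha> i = 0" using sum_nonneg_eq_0_iff[OF finV nn] by simp
    show ?thesis unfolding cc_def
    proof (intro sum.neutral ballI)
      fix i assume "i \<in> V"
      then have "Pev P w \<alpha> m i * Q \<alpha> i = 0" using z by blast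
      then show "Pev P w \<alpha> m i * w m i * Q \<alpha> i = 0" by (simp add: mult.commute mult.left_commute)
    qed
  qed
  have "avoidU V P w \<alpha> t Fs s = (\<Sum>m\<in>{m\<in>T. Q \<alpha> m \<noteq> 0}. ?F s m * cc \<alpha> m / Q \<alpha> s)"
    unfolding avoidU_def T_def[symmetric] rc by (intro sum.cong refl) simp
  also have "\<dots> = (\<Sum>m\<in>T. ?F s m * cc \<alpha> m / Q \<alpha> s)"
    by (rule sum.mono_neutral_left) (use finT cc0 in auto)
  also have "\<dots> = Na \<alpha> s / Q \<alpha> s" unfolding Na_def using s by (simp add: sum_divide_distrib)
  finally show ?thesis .
qed

end



lemma powr_shift:
  fixes \<alpha> :: real
  assumes "\<alpha> > 0"
  shows "\<alpha> powr w * Y / \<alpha> powr Lx = \<alpha> powr (w + Li - Lx) * (Y / \<alpha> powr Li)"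
  using assms by (simp add: powr_diff powr_add field_simps)

context setting begin

abbreviation "Rt \<equiv> R \<union> {t}"
definition "sig x i = w x i + Lf i - Lf x"
definition "Bm \<alpha> x i = (if x = t then 0 else P x i * \<alpha> powr sig x i)"
definition "qa \<alpha> x = Q \<alpha> x / \<alpha> powr Lf x"
definition "da \<alpha> x = (Na \<alpha> x - Lf x * Q \<alpha> x) / \<alpha> powr Lf x"
definition "gg \<alpha> x = (if x = t then 0 else (\<Sum>i\<in>Rt. Bm \<alpha> x i * sig x i * qa \<alpha> i))"

lemma Lf_t: "Lf t = 0" unfolding Lf_def by simp

lemma term_shift:
  assumes a: "\<alpha> > 0" and x: "x \<in> R"
  shows "Pev P w \<alpha> x i * Y / \<alpha> powr Lf x = Bm \<alpha> x i * (Y / \<alpha> powr Lf i)"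
proof -
  have "x \<noteq> t" using x R_T tT by auto
  have h: "\<alpha> powr w x i * Y / \<alpha> powr Lf x = \<alpha> powr (w x i + Lf i - Lf x) * (Y / \<alpha> powr Lf i)"
    by (rule powr_shift[OF a])
  have "P x i * \<alpha> powr w x i * Y / \<alpha> powr Lf x = P x i * (\<alpha> powr w x i * Y / \<alpha> powr Lf x)"
    by simp
  also have "\<dots> = P x i * \<alpha> powr (w x i + Lf i - Lf x) * (Y / \<alpha> powr Lf i)"
    unfolding h by simp
  finally show ?thesis unfolding Pev_def Bm_def sig_def using \<open>x \<noteq> t\<close> by simp
qed

lemma qa_t: "0 < \<alpha> \<Longrightarrow> qa \<alpha> t = 1" unfolding qa_def using Q_t Lf_t by simp
lemma da_t: "da \<alpha> t = 0" unfolding da_def using Na_out[OF tT] Lf_t by simp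

lemma qa_eq:
  assumes a: "0 < \<alpha>" "\<alpha> < 1" and x: "x \<in> R"
  shows "qa \<alpha> x = (\<Sum>i\<in>Rt. Bm \<alpha> x i * qa \<alpha> i)"
proof -
  have xT: "x \<in> T" using x R_T by auto
  have "Q \<alpha> x = (\<Sum>i\<in>V. Pev P w \<alpha> x i * Q \<alpha> i)" by (rule Q_eq[OF a xT])
  also have "\<dots> = (\<Sum>i\<in>Rt. Pev P w \<alpha> x i * Q \<alpha> i)"
    by (rule sum_R) (use Q_U[OF a] Q_Fs in auto)
  finally have "qa \<alpha> x = (\<Sum>i\<in>Rt. Pev P w \<alpha> x i * Q \<alpha> i / \<alpha> powr Lf x)"
    unfolding qa_def by (simp add: sum_divide_distrib)
  also have "\<dots> = (\<Sum>i\<in>Rt. Bm \<alpha> x i * qa \<alpha> i)"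
    unfolding qa_def using term_shift[OF a(1) x] by simp
  finally show ?thesis .
qed

lemma da_eq:
  assumes a: "0 < \<alpha>" "\<alpha> < 1" and x: "x \<in> R"
  shows "da \<alpha> x = (\<Sum>i\<in>Rt. Bm \<alpha> x i * da \<alpha> i) + gg \<alpha> x"
proof -
  have xT: "x \<in> T" using x R_T by auto
  have xt: "x \<noteq> t" using xT tT by auto
  have N1: "Na \<alpha> x = (\<Sum>i\<in>Rt. Pev P w \<alpha> x i * (Na \<alpha> i + w x i * Q \<alpha> i))"
    using Na_eq[OF a xT] sum_R[of "\<lambda>i. Na \<alpha> i + w x i * Q \<alpha> i" "Pev P w \<alpha> x"]
      Q_U[OF a] Na_U[OF a] Q_Fs Na_out FsT by simp
  have Q1: "Q \<alpha> x = (\<Sum>i\<in>Rt. Pev P w \<alpha> x i * Q \<alpha> i)"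
    using Q_eq[OF a xT] sum_R[of "Q \<alpha>" "Pev P w \<alpha> x"] Q_U[OF a] Q_Fs by simp
  have "Na \<alpha> x - Lf x * Q \<alpha> x
      = (\<Sum>i\<in>Rt. Pev P w \<alpha> x i * ((Na \<alpha> i - Lf i * Q \<alpha> i) + sig x i * Q \<alpha> i))"
    unfolding N1 Q1 sum_distrib_left sum_subtractf[symmetric] sig_def
    by (intro sum.cong refl) (simp add: algebra_simps)
  then have "da \<alpha> x = (\<Sum>i\<in>Rt. Pev P w \<alpha> x i * ((Na \<alpha> i - Lf i * Q \<alpha> i) + sig x i * Q \<alpha> i)
       / \<alpha> powr Lf x)"
    unfolding da_def by (simp add: sum_divide_distrib)
  also have "\<dots> = (\<Sum>i\<in>Rt. Bm \<alpha> x i * (da \<alpha> i + sig x i * qa \<alpha> i))"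
    using term_shift[OF a(1) x] unfolding da_def qa_def
    by (intro sum.cong refl) (simp add: add_divide_distrib distrib_left)
  also have "\<dots> = (\<Sum>i\<in>Rt. Bm \<alpha> x i * da \<alpha> i) + gg \<alpha> x"
    unfolding gg_def using xt by (simp add: sum.distrib algebra_simps)
  finally show ?thesis .
qed

end



lemma powr_sig_bound:
  fixes \<alpha> s :: real
  assumes a: "0 < \<alpha>" "\<alpha> < 1" and s: "s \<ge> 0"
  shows "\<alpha> powr s * s \<le> 1 / (- ln \<alpha>)"
proof -
  define l where "l = - ln \<alpha>"
  have l: "l > 0" unfolding l_def using a by simp
  have e: "\<alpha> powr s = inverse (exp (s * l))"
    unfolding l_def powr_def using a by (simp add: exp_minus[symmetric])
  have "s * l \<le> exp (s * l)" using exp_ge_add_one_self[of "s * l"] by linarith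
  then have "s \<le> exp (s * l) / l" using l by (simp add: le_divide_eq)
  then have "s / exp (s * l) \<le> 1 / l" using l by (simp add: divide_le_eq field_simps)
  then show ?thesis unfolding e l_def[symmetric] by (simp add: divide_inverse mult.commute)
qed

lemma half_powr:
  fixes \<alpha> s L :: real
  assumes a: "0 < \<alpha>" "\<alpha> \<le> 1/2" and s: "s \<ge> 0"
  shows "\<alpha> powr s * 2 powr L \<le> 2 powr (L - s)"
proof -
  have "\<alpha> powr s \<le> (1/2) powr s" using a s by (intro powr_mono2) auto
  also have "(1/2::real) powr s = 1 / 2 powr s" by (simp add: powr_divide)
  finally have "\<alpha> powr s * 2 powr L \<le> 2 powr L / 2 powr s"
    by (simp add: mult_right_mono divide_inverse)
  also have "\<dots> = 2 powr (L - s)" by (simp add: powr_diff)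
  finally show ?thesis .
qed

context setting begin

definition "wmin = Min (insert 1 ((\<lambda>(a,b). w a b) ` {(a,b). a \<in> V \<and> b \<in> V \<and> P a b > 0}))"
definition "c2 = 1 - 2 powr (- wmin)"
definition "phi x = 2 powr Lf x"
definition "Phi = Max (phi ` Rt)"

lemma finRt: "finite Rt" using finT R_T finite_subset by auto

lemma wmin_pos: "wmin > 0"
proof -
  have fin: "finite {(a,b). a \<in> V \<and> b \<in> V \<and> P a b > 0}"
    by (rule finite_subset[of _ "V \<times> V"]) (use finV in auto)
  show ?thesis unfolding wmin_def using fin wpos by (subst Min_gr_iff) auto
qed

lemma wmin_le: "a \<in> V \<Longrightarrow> b \<in> V \<Longrightarrow> P a b > 0 \<Longrightarrow> wmin \<le> w a b"
proof -
  assume ab: "a \<in> V" "b \<in> V" "P a b > 0"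
  have fin: "finite {(a,b). a \<in> V \<and> b \<in> V \<and> P a b > 0}"
    by (rule finite_subset[of _ "V \<times> V"]) (use finV in auto)
  show ?thesis unfolding wmin_def using fin ab by (intro Min_le) force+
qed

lemma c2_pos: "c2 > 0" unfolding c2_def using wmin_pos by (simp add: powr_less_one)
lemma c2_le1: "c2 \<le> 1" unfolding c2_def by simp

lemma Rt_V: "Rt \<subseteq> V" using R_T T_alt tV by auto

lemma phi_ge1: "x \<in> Rt \<Longrightarrow> phi x \<ge> 1"
  unfolding phi_def using Lf_nonneg by (intro ge_one_powr_ge_zero) auto

lemma phi_le_Phi: "x \<in> Rt \<Longrightarrow> phi x \<le> Phi"
  unfolding Phi_def using finRt by (intro Max_ge) auto

lemma Phi_ge1: "Phi \<ge> 1" using phi_ge1[of t] phi_le_Phi[of t] by auto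

lemma Bm_nn: "x \<in> Rt \<Longrightarrow> i \<in> Rt \<Longrightarrow> Bm \<alpha> x i \<ge> 0"
  unfolding Bm_def using Pnn Rt_V by (auto intro!: mult_nonneg_nonneg)

lemma Psum_Rt: "x \<in> V \<Longrightarrow> (\<Sum>i\<in>Rt. P x i) \<le> 1"
proof -
  assume x: "x \<in> V"
  have "(\<Sum>i\<in>Rt. P x i) \<le> (\<Sum>i\<in>V. P x i)" using Rt_V finV Pnn x by (intro sum_mono2) auto
  then show ?thesis using Prow x by simp
qed

lemma phi_row:
  assumes a: "0 < \<alpha>" "\<alpha> \<le> 1/2" and x: "x \<in> Rt"
  shows "(\<Sum>i\<in>Rt. Bm \<alpha> x i * phi i) \<le> phi x - c2"
proof (cases "x = t")
  case True
  then show ?thesis unfolding Bm_def using phi_ge1[OF x] c2_le1 by simp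
next
  case False
  then have xR: "x \<in> R" and xT: "x \<in> T" using x R_T by auto
  have xV: "x \<in> V" using xT T_alt by auto
  have tb: "Bm \<alpha> x i * phi i \<le> P x i * 2 powr (Lf x - wmin)" if i: "i \<in> Rt" for i
  proof (cases "P x i > 0")
    case True
    have iV: "i \<in> V" using i Rt_V by auto
    have sg: "sig x i \<ge> 0" using bellman[OF xT i True] unfolding sig_def by simp
    have "\<alpha> powr sig x i * phi i \<le> 2 powr (Lf i - sig x i)"
      unfolding phi_def by (rule half_powr[OF a sg])
    also have "\<dots> = 2 powr (Lf x - w x i)" unfolding sig_def by simp
    also have "\<dots> \<le> 2 powr (Lf x - wmin)" using wmin_le[OF xV iV True] by (intro powr_mono) auto
    finally show ?thesis unfolding Bm_def using False True
      by (simp add: mult.assoc mult_left_mono)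
  next
    case nP: False
    then have "P x i = 0" using Pnn[OF xV] i Rt_V by force
    then show ?thesis unfolding Bm_def by simp
  qed
  have "(\<Sum>i\<in>Rt. Bm \<alpha> x i * phi i) \<le> (\<Sum>i\<in>Rt. P x i * 2 powr (Lf x - wmin))"
    by (rule sum_mono) (rule tb)
  also have "\<dots> = 2 powr (Lf x - wmin) * (\<Sum>i\<in>Rt. P x i)" by (simp add: sum_distrib_right mult.commute)
  also have "\<dots> \<le> 2 powr (Lf x - wmin)" using Psum_Rt[OF xV] by (simp add: mult_left_le)
  also have "\<dots> = phi x - phi x * c2" unfolding phi_def c2_def
    by (simp add: powr_diff algebra_simps powr_minus divide_inverse)
  also have "\<dots> \<le> phi x - c2" using phi_ge1[OF x] c2_pos by (simp add: mult_le_cancel_right1)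
  finally show ?thesis .
qed

end



context setting begin

lemma qa_nn: "0 < \<alpha> \<Longrightarrow> \<alpha> < 1 \<Longrightarrow> qa \<alpha> x \<ge> 0"
  unfolding qa_def using Q_nn by simp

lemma qa_bound:
  assumes a: "0 < \<alpha>" "\<alpha> \<le> 1/2" and x: "x \<in> Rt"
  shows "qa \<alpha> x \<le> Phi / c2"
proof -
  have a1: "\<alpha> < 1" using a by simp
  have "qa \<alpha> x \<le> 1 / c2 * phi x"
  proof (rule maxp[OF finRt x, where A="Bm \<alpha>" and \<phi>=phi and c=c2 and \<eta>=1 and v="qa \<alpha>"])
    show "\<And>a k. a \<in> Rt \<Longrightarrow> k \<in> Rt \<Longrightarrow> 0 \<le> Bm \<alpha> a k" by (rule Bm_nn)
    show "\<And>a. a \<in> Rt \<Longrightarrow> 0 < phi a" using phi_ge1 by force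
    show "\<And>a. a \<in> Rt \<Longrightarrow> (\<Sum>k\<in>Rt. Bm \<alpha> a k * phi k) \<le> phi a - c2" by (rule phi_row[OF a])
    fix y assume y: "y \<in> Rt"
    show "qa \<alpha> y \<le> (\<Sum>k\<in>Rt. Bm \<alpha> y k * qa \<alpha> k) + 1"
    proof (cases "y = t")
      case True
      then show ?thesis using qa_t[OF a(1)] unfolding Bm_def by simp
    next
      case False
      then show ?thesis using qa_eq[OF a(1) a1, of y] y by simp
    qed
  qed (use c2_pos in auto)
  also have "\<dots> \<le> Phi / c2" using phi_le_Phi[OF x] c2_pos by (simp add: divide_right_mono)
  finally show ?thesis .
qed

lemma G_nn:
  assumes a: "0 < \<alpha>" "\<alpha> \<le> 1/2"
  shows "Phi / c2 * (1 / (- ln \<alpha>)) \<ge> 0"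
proof -
  have "1 / (- ln \<alpha>) > 0" using a by simp
  moreover have "Phi / c2 \<ge> 0" using Phi_ge1 c2_pos by simp
  ultimately show ?thesis by (meson less_imp_le mult_nonneg_nonneg)
qed

lemma gg_bounds:
  assumes a: "0 < \<alpha>" "\<alpha> \<le> 1/2" and x: "x \<in> Rt"
  shows "0 \<le> gg \<alpha> x \<and> gg \<alpha> x \<le> Phi / c2 * (1 / (- ln \<alpha>))"
proof (cases "x = t")
  case True
  have "gg \<alpha> x = 0" unfolding gg_def using True by simp
  then show ?thesis using G_nn[OF a] by simp
next
  case False
  have a1: "\<alpha> < 1" using a by simp
  then have xR: "x \<in> R" and xT: "x \<in> T" using x R_T False by auto
  have xV: "x \<in> V" using xT T_alt by auto
  have lpos: "1 / (- ln \<alpha>) > 0" using a a1 by simp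
  have tb: "0 \<le> Bm \<alpha> x i * sig x i * qa \<alpha> i \<and>
      Bm \<alpha> x i * sig x i * qa \<alpha> i \<le> P x i * (Phi / c2 * (1 / (- ln \<alpha>)))" if i: "i \<in> Rt" for i
  proof (cases "P x i > 0")
    case True
    have sg: "sig x i \<ge> 0" using bellman[OF xT i True] unfolding sig_def by simp
    have q: "0 \<le> qa \<alpha> i" "qa \<alpha> i \<le> Phi / c2" using qa_nn[OF a(1) a1] qa_bound[OF a i] by auto
    have p1: "0 \<le> \<alpha> powr sig x i * sig x i" using sg by simp
    have p2: "\<alpha> powr sig x i * sig x i \<le> 1 / (- ln \<alpha>)" by (rule powr_sig_bound[OF a(1) a1 sg])
    have e: "Bm \<alpha> x i * sig x i * qa \<alpha> i = P x i * ((\<alpha> powr sig x i * sig x i) * qa \<alpha> i)"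
      unfolding Bm_def using False by simp
    have "(\<alpha> powr sig x i * sig x i) * qa \<alpha> i \<le> (1 / (- ln \<alpha>)) * (Phi / c2)"
      using p1 p2 q lpos by (intro mult_mono) auto
    then have h: "(\<alpha> powr sig x i * sig x i) * qa \<alpha> i \<le> Phi / c2 * (1 / (- ln \<alpha>))"
      by (simp only: mult.commute)
    have P0: "P x i \<ge> 0" using True by simp
    show ?thesis unfolding e
      using mult_left_mono[OF h P0] mult_nonneg_nonneg[OF P0 mult_nonneg_nonneg[OF p1 q(1)]] by simp
  next
    case nP: False
    then have "P x i = 0" using Pnn[OF xV] i Rt_V by force
    then show ?thesis unfolding Bm_def by simp
  qed
  have "gg \<alpha> x = (\<Sum>i\<in>Rt. Bm \<alpha> x i * sig x i * qa \<alpha> i)" unfolding gg_def using False by simp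
  moreover have "(\<Sum>i\<in>Rt. Bm \<alpha> x i * sig x i * qa \<alpha> i) \<ge> 0" using tb by (intro sum_nonneg) auto
  moreover have "(\<Sum>i\<in>Rt. Bm \<alpha> x i * sig x i * qa \<alpha> i) \<le> (\<Sum>i\<in>Rt. P x i * (Phi / c2 * (1 / (- ln \<alpha>))))"
    using tb by (intro sum_mono) auto
  moreover have "(\<Sum>i\<in>Rt. P x i * (Phi / c2 * (1 / (- ln \<alpha>)))) \<le> Phi / c2 * (1 / (- ln \<alpha>))"
  proof -
    have "(\<Sum>i\<in>Rt. P x i * (Phi / c2 * (1 / (- ln \<alpha>)))) = (\<Sum>i\<in>Rt. P x i) * (Phi / c2 * (1 / (- ln \<alpha>)))"
      by (rule sum_distrib_right[symmetric])
    also have "\<dots> \<le> 1 * (Phi / c2 * (1 / (- ln \<alpha>)))"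
      by (rule mult_right_mono[OF Psum_Rt[OF xV] G_nn[OF a]])
    finally show ?thesis by simp
  qed
  ultimately show ?thesis by linarith
qed

lemma da_bounds:
  assumes a: "0 < \<alpha>" "\<alpha> \<le> 1/2" and x: "x \<in> Rt"
  shows "0 \<le> da \<alpha> x \<and> da \<alpha> x \<le> Phi / c2 * (1 / (- ln \<alpha>)) / c2 * Phi"
proof -
  have a1: "\<alpha> < 1" using a by simp
  have nn: "\<And>a k. a \<in> Rt \<Longrightarrow> k \<in> Rt \<Longrightarrow> 0 \<le> Bm \<alpha> a k" by (rule Bm_nn)
  have ph: "\<And>a. a \<in> Rt \<Longrightarrow> 0 < phi a" using phi_ge1 by force
  have row: "\<And>a. a \<in> Rt \<Longrightarrow> (\<Sum>k\<in>Rt. Bm \<alpha> a k * phi k) \<le> phi a - c2" by (rule phi_row[OF a])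
  let ?G = "Phi / c2 * (1 / (- ln \<alpha>))"
  have G0: "?G \<ge> 0" by (rule G_nn[OF a])
  have eqs: "da \<alpha> y = (\<Sum>k\<in>Rt. Bm \<alpha> y k * da \<alpha> k) + gg \<alpha> y" if y: "y \<in> Rt" for y
  proof (cases "y = t")
    case True
    then show ?thesis using da_t unfolding Bm_def gg_def by simp
  next
    case False
    then show ?thesis using da_eq[OF a(1) a1] y by simp
  qed
  have "da \<alpha> x \<le> ?G / c2 * phi x"
  proof (rule maxp[OF finRt x nn ph row c2_pos G0])
    fix y assume y: "y \<in> Rt"
    show "da \<alpha> y \<le> (\<Sum>k\<in>Rt. Bm \<alpha> y k * da \<alpha> k) + ?G"
      using eqs[OF y] gg_bounds[OF a y] by linarith
  qed
  also have "\<dots> \<le> ?G / c2 * Phi"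
    by (rule mult_left_mono[OF phi_le_Phi[OF x] divide_nonneg_pos[OF G0 c2_pos]])
  finally have up: "da \<alpha> x \<le> ?G / c2 * Phi" .
  have "- da \<alpha> x \<le> 0 / c2 * phi x"
  proof (rule maxp[OF finRt x nn ph row c2_pos order_refl])
    fix y assume y: "y \<in> Rt"
    show "- da \<alpha> y \<le> (\<Sum>k\<in>Rt. Bm \<alpha> y k * - da \<alpha> k) + 0"
      using eqs[OF y] gg_bounds[OF a y] by (simp add: sum_negf)
  qed
  then show ?thesis using up by simp
qed

end



lemma lim_aux: "((\<lambda>\<alpha>::real. L + K * (1 / (- ln \<alpha>))) \<longlongrightarrow> L) (at_right 0)"
proof -
  have "LIM x at_right (0::real). - ln x :> at_top"
    using ln_at_0 filterlim_uminus_at_bot by blast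
  then have "((\<lambda>x. inverse (- ln x)) \<longlongrightarrow> (0::real)) (at_right 0)" by (rule tendsto_inverse_0_at_top)
  then have "((\<lambda>x. L + K * (1 / (- ln x))) \<longlongrightarrow> L + K * 0) (at_right (0::real))"
    by (intro tendsto_intros) (simp add: divide_inverse)
  then show ?thesis by simp
qed

context setting begin

lemma qa_lower:
  assumes s: "s \<in> R"
  shows "\<exists>pp>0. \<forall>\<alpha>. 0 < \<alpha> \<longrightarrow> \<alpha> < 1 \<longrightarrow> qa \<alpha> s \<ge> pp"
proof -
  obtain xs where xs: "dpath V P Fs s t xs" "path_cost w xs = Lf s" using Lmin_attained[OF s] by auto
  define pp where "pp = (\<Prod>k<length xs - 1. P (xs!k) (xs!Suc k))"
  have d: "xs \<noteq> []" "hd xs = s" "last xs = t" "distinct xs" "set xs \<subseteq> V - Fs"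
    "\<forall>k < length xs - 1. P (xs ! k) (xs ! Suc k) > 0" using xs(1) unfolding dpath_def by auto
  have pp: "pp > 0" unfolding pp_def using d(6) by (intro prod_pos) auto
  have tb: "t \<notin> set (butlast xs)"
  proof -
    have "distinct (butlast xs @ [last xs])" using d(1,4) append_butlast_last_id[OF d(1)] by simp
    then show ?thesis using d(3) by auto
  qed
  have "qa \<alpha> s \<ge> pp" if a: "0 < \<alpha>" "\<alpha> < 1" for \<alpha>
  proof -
    have ge: "Q \<alpha> (hd xs) \<ge> (\<Prod>k<length xs - 1. Pev P w \<alpha> (xs!k) (xs!Suc k))"
    proof (rule prod_chain_ge[where xs=xs and t=t and Q="Q \<alpha>" and A="Pev P w \<alpha>"])
      fix x y assume xy: "x \<noteq> t" "x \<in> set xs" "y \<in> set xs"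
      have xT: "x \<in> T" using xy d(5) T_alt by auto
      have xV: "x \<in> V" "y \<in> V" using xy d(5) by auto
      have "Pev P w \<alpha> x y * Q \<alpha> y \<le> (\<Sum>i\<in>V. Pev P w \<alpha> x i * Q \<alpha> i)"
        by (rule member_le_sum[OF xV(2) _ finV]) (use Pev_nn[OF xV(1) _ a(1)] Q_nn[OF a] in auto)
      then show "Q \<alpha> x \<ge> Pev P w \<alpha> x y * Q \<alpha> y" using Q_eq[OF a xT] by linarith
    next
      fix x y assume "x \<in> set xs" "y \<in> set xs"
      then show "Pev P w \<alpha> x y \<ge> 0" using Pev_nn[OF _ _ a(1)] d(5) by auto
    qed (use Q_t d(1,3) tb in auto)
    have "(\<Prod>k<length xs - 1. Pev P w \<alpha> (xs!k) (xs!Suc k))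
        = pp * (\<Prod>k<length xs - 1. \<alpha> powr w (xs!k) (xs!Suc k))"
      unfolding pp_def Pev_def by (rule prod.distrib)
    also have "(\<Prod>k<length xs - 1. \<alpha> powr w (xs!k) (xs!Suc k)) = \<alpha> powr path_cost w xs"
      unfolding path_cost_def using a by (simp add: powr_sum)
    finally have "Q \<alpha> s \<ge> pp * \<alpha> powr Lf s" using ge d(2) xs(2) by simp
    then show ?thesis unfolding qa_def using a by (simp add: le_divide_eq)
  qed
  then show ?thesis using pp by blast
qed

lemma final_bound:
  assumes s: "s \<in> R" and pp: "pp > 0" "\<And>\<alpha>. 0 < \<alpha> \<Longrightarrow> \<alpha> < 1 \<Longrightarrow> qa \<alpha> s \<ge> pp"
    and a: "0 < \<alpha>" "\<alpha> \<le> 1/2"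
  shows "Lf s \<le> avoidU V P w \<alpha> t Fs s \<and>
         avoidU V P w \<alpha> t Fs s \<le> Lf s + Phi * Phi / (c2 * c2 * pp) * (1 / (- ln \<alpha>))"
proof -
  have a1: "\<alpha> < 1" using a by simp
  have sT: "s \<in> T" using s R_T by auto
  have sRt: "s \<in> Rt" using s by auto
  have q: "qa \<alpha> s \<ge> pp" using pp(2)[OF a(1) a1] .
  have ap: "\<alpha> powr Lf s > 0" using a by simp
  have Qs: "Q \<alpha> s = \<alpha> powr Lf s * qa \<alpha> s" unfolding qa_def using ap by simp
  have Ns: "Na \<alpha> s = Lf s * Q \<alpha> s + \<alpha> powr Lf s * da \<alpha> s" unfolding da_def using ap by simp
  have qpos: "qa \<alpha> s > 0" using q pp(1) by linarith
  have U: "avoidU V P w \<alpha> t Fs s = Lf s + da \<alpha> s / qa \<alpha> s"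
    unfolding avoidU_eq[OF a(1) a1 sT] Ns Qs using ap qpos by (simp add: field_simps)
  have db: "0 \<le> da \<alpha> s" "da \<alpha> s \<le> Phi / c2 * (1 / (- ln \<alpha>)) / c2 * Phi"
    using da_bounds[OF a sRt] by auto
  have "da \<alpha> s / qa \<alpha> s \<le> da \<alpha> s / pp" using db(1) q pp(1) by (intro divide_left_mono) auto
  also have "\<dots> \<le> (Phi / c2 * (1 / (- ln \<alpha>)) / c2 * Phi) / pp" using db(2) pp(1) by (intro divide_right_mono) auto
  also have "\<dots> = Phi * Phi / (c2 * c2 * pp) * (1 / (- ln \<alpha>))" by (simp add: field_simps)
  finally show ?thesis unfolding U using db(1) qpos by simp
qed

end



theorem mainTheorem9:
  fixes V :: "'v set" and P w :: "'v \<Rightarrow> 'v \<Rightarrow> real" and t s :: 'v and Fs :: "'v set"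
  assumes "finite V"
    and "\<And>i j. i \<in> V \<Longrightarrow> j \<in> V \<Longrightarrow> P i j \<ge> 0"
    and "\<And>i. i \<in> V \<Longrightarrow> (\<Sum>j\<in>V. P i j) = 1"
    and "\<And>i j. i \<in> V \<Longrightarrow> j \<in> V \<Longrightarrow> P i j > 0 \<Longrightarrow> w i j > 0"
    and "t \<in> V" and "Fs \<subseteq> V - {t}" and "s \<in> V - (Fs \<union> {t})"
    and "\<exists>xs. dpath V P Fs s t xs"
  shows "((\<lambda>\<alpha>. avoidU V P w \<alpha> t Fs s) \<longlongrightarrow> Lmin V P w Fs s t) (at_right 0)"
proof -
  interpret st: setting V P w t Fs
    by (unfold_locales) (use assms in auto)
  have sR: "s \<in> st.R" unfolding st.R_def st.T_alt using assms(7,8) by auto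
  have st: "s \<noteq> t" using assms(7) by auto
  obtain pp where pp: "pp > 0" "\<And>\<alpha>. 0 < \<alpha> \<Longrightarrow> \<alpha> < 1 \<Longrightarrow> st.qa \<alpha> s \<ge> pp"
    using st.qa_lower[OF sR] by blast
  define K where "K = st.Phi * st.Phi / (st.c2 * st.c2 * pp)"
  have ev: "eventually (\<lambda>\<alpha>. st.Lf s \<le> avoidU V P w \<alpha> t Fs s \<and>
      avoidU V P w \<alpha> t Fs s \<le> st.Lf s + K * (1 / (- ln \<alpha>))) (at_right 0)"
    unfolding eventually_at_right_field
    by (rule exI[of _ "1/2"]) (use st.final_bound[OF sR pp] in \<open>auto simp: K_def\<close>)
  have L: "Lmin V P w Fs s t = st.Lf s" unfolding st.Lf_def using st by simp
  show ?thesis unfolding L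
  proof (rule tendsto_sandwich[OF _ _ tendsto_const lim_aux[of "st.Lf s" K]])
    show "\<forall>\<^sub>F \<alpha> in at_right 0. st.Lf s \<le> avoidU V P w \<alpha> t Fs s" using ev by (rule eventually_mono) auto
    show "\<forall>\<^sub>F \<alpha> in at_right 0. avoidU V P w \<alpha> t Fs s \<le> st.Lf s + K * (1 / - ln \<alpha>)"
      using ev by (rule eventually_mono) auto
  qed
qed


end
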